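(* In the Jolteon protocol described in the context, if a block $B$ is globally direct-committed, then any timeout certificate of a round higher than $B.r$ contains a $qc_{high}$ of round at least $B.r$.
   Context: Jolteon protocol. There are $n=3f+1$ replicas, at most $f$ Byzantine, the rest honest; reliable authenticated channels; ideal threshold signatures in which $2f+1$ shares on the same message from distinct replicas combine into a threshold signature. A block is $B=(id,qc,tc,r,v,txn)$, with $qc$ a quorum certificate of its parent, $tc$ a timeout certificate or $\bot$, round $r$, view $v=0$, transactions $txn$, and $id$ a collision-resistant hash of the contents. A quorum certificate (QC) for $B$ is a threshold signature on $(B.id,B.r,B.v)$ from $2f+1$ shares (votes); $qc.r=B.r$; $B$ is certified if a QC for it exists; a genesis block of round $0$ has a QC. QCs are compared by round. A timeout message for round $r$ is a share on $r$ with the sender's $qc_{high}$; a timeout certificate (TC) for round $r$ is a threshold signature on $r$ from $2f+1$ timeout messages together with their $2f+1$ $qc_{high}$'s (all of round $<r$). Each round $r$ has a leader $L_r$ (round robin). Each replica keeps $r_{vote}=0$, $r_{cur}=1$, $qc_{high}$ = genesis QC. Propose: upon entering round $r$, $L_r$ multicasts $B=(id,qc_{high},tc,r,0,txn)$, with $tc$ the round-$(r-1)$ TC if $L_r$ entered round $r$ by receiving it, else $\bot$. Vote: upon the first valid proposal $B=(id,qc,tc,r,v,txn)$ from $L_r$, execute Advance Round, Lock, Commit; then if $r=r_{cur}$, $v=v_{cur}=0$, $r>r_{vote}$, and either $r=qc.r+1$ or ($r=tc.r+1$ and $qc.r\ge\max\{q.r: q$ a $qc_{high}$ in $tc\}$),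 send a share on $(id,r,v)$ to $L_{r+1}$ and set $r_{vote}\gets r$. Lock: upon seeing a valid QC $qc$ (formed from votes or contained in a proposal, timeout message or TC), set $qc_{high}\gets\max(qc_{high},qc)$. Commit: whenever there are two certified blocks $B,B'$ with $B'.qc$ certifying $B$ and $B'.r=B.r+1$, commit $B$ and all its ancestors. Advance Round: set $r_{cur}\gets\max(r_{cur},r)$ upon receiving or forming a round-$(r-1)$ QC or TC. Timer: upon entering round $r$, send the round-$(r-1)$ TC to $L_r$ if held and reset a timer; on expiry stop voting in round $r_{cur}$ and multicast a timeout message; upon a valid timeout message or TC execute Advance Round, Lock, Commit; upon $2f+1$ timeout messages form a TC. Definition: a block $B$ is globally direct-committed if $f+1$ honest replicas each successfully perform the Vote step on a proposal of a block $B'$ in round $B.r+1$ such that $B'.qc$ certifies $B$ (these Vote calls invoke Lock, setting $qc_{high}\gets B'.qc$, and produce $f+1$ matching votes). *)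

theory Defs
  imports Main
begin

text \<open>Model of the Jolteon protocol (view fixed to 0).  Honest replicas are a set Hon; every honest replica
  runs the local state machine below, driven by an arbitrary (adversarially scheduled)
  sequence of input events.  Byzantine replicas are unconstrained; their only influence
  on the statement is through the timeout messages they may contribute to a TC.\<close>

definition replicas :: "nat \<Rightarrow> nat set" where
  "replicas f = {..<3*f+1}"

text \<open>A quorum certificate: threshold signature on (id, round, view).\<close>
datatype 'i qc = QC (qc_id: 'i) (qc_round: nat) (qc_view: nat)

text \<open>A timeout certificate of round tc_round: the 2f+1 timeout messages it is
  combined from, each given as (sender, sender's qc_high).\<close>
datatype 'i tc = TC (tc_round: nat) (tc_msgs: "(nat \<times> 'i qc) list")

record ('i, 't) block =
  bid :: 'i
  bqc :: "'i qc"
  btc :: "'i tc option"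
  bround :: nat
  bview :: nat
  btxn :: 't

text \<open>Local state of a replica; tmo = the timer of round rcur has expired
  (so the replica has stopped voting in round rcur).\<close>
record 'i rstate =
  rvote :: nat
  rcur :: nat
  qchigh :: "'i qc"
  tmo :: bool

definition init_state :: "'i \<Rightarrow> 'i rstate" where
  "init_state g = \<lparr>rvote = 0, rcur = 1, qchigh = QC g 0 0, tmo = False\<rparr>"

definition maxqc :: "'i qc \<Rightarrow> 'i qc \<Rightarrow> 'i qc" where
  "maxqc a b = (if qc_round a < qc_round b then b else a)"

definition lock :: "'i rstate \<Rightarrow> 'i qc \<Rightarrow> 'i rstate" where
  "lock s q = s\<lparr>qchigh := maxqc (qchigh s) q\<rparr>"

definition advance :: "'i rstate \<Rightarrow> nat \<Rightarrow> 'i rstate" where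
  "advance s r = (if rcur s < r then s\<lparr>rcur := r, tmo := False\<rparr> else s)"

text \<open>Seeing a valid QC of round r-1: Advance Round (to r), Lock (Commit has no effect
  on the state relevant here).\<close>
definition see_qc :: "'i rstate \<Rightarrow> 'i qc \<Rightarrow> 'i rstate" where
  "see_qc s q = lock (advance s (Suc (qc_round q))) q"

definition see_tc :: "'i rstate \<Rightarrow> 'i tc \<Rightarrow> 'i rstate" where
  "see_tc s t = foldl see_qc (advance s (Suc (tc_round t))) (map snd (tc_msgs t))"

definition pre_vote :: "'i rstate \<Rightarrow> ('i, 't) block \<Rightarrow> 'i rstate" where
  "pre_vote s B = (let s1 = see_qc s (bqc B) in
     (case btc B of None \<Rightarrow> s1 | Some t \<Rightarrow> see_tc s1 t))"

definition vote_cond :: "'i rstate \<Rightarrow> ('i, 't) block \<Rightarrow> bool" where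
  "vote_cond s B \<longleftrightarrow>
     bround B = rcur s \<and> bview B = 0 \<and> bround B > rvote s \<and> \<not> tmo s \<and>
     (bround B = Suc (qc_round (bqc B)) \<or>
      (\<exists>t. btc B = Some t \<and> bround B = Suc (tc_round t) \<and>
           (\<forall>(j, q) \<in> set (tc_msgs t). qc_round q \<le> qc_round (bqc B))))"

definition proposal_step :: "'i rstate \<Rightarrow> ('i, 't) block \<Rightarrow> 'i rstate" where
  "proposal_step s B = (let s2 = pre_vote s B in
     if vote_cond s2 B then s2\<lparr>rvote := bround B\<rparr> else s2)"

datatype ('i, 't) event =
    RecvProposal "('i, 't) block"       \<comment> \<open>first valid proposal of its round from its leader\<close>
  | SeeQC "'i qc"                        \<comment> \<open>a valid QC formed from votes or received\<close>
  | RecvTimeout nat nat "'i qc"          \<comment> \<open>valid timeout message (sender, round, qc_high)\<close>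
  | SeeTC "'i tc"                        \<comment> \<open>valid TC received or formed\<close>
  | Expire
  | Noop

fun step :: "'i rstate \<Rightarrow> ('i, 't) event \<Rightarrow> 'i rstate" where
  "step s (RecvProposal B) = proposal_step s B"
| "step s (SeeQC q) = see_qc s q"
| "step s (RecvTimeout j r q) = see_qc s q"
| "step s (SeeTC t) = see_tc s t"
| "step s Expire = s\<lparr>tmo := True\<rparr>"
| "step s Noop = s"

fun run :: "'i \<Rightarrow> (nat \<Rightarrow> ('i, 't) event) \<Rightarrow> nat \<Rightarrow> 'i rstate" where
  "run g ev 0 = init_state g"
| "run g ev (Suc k) = step (run g ev k) (ev k)"

text \<open>The honest replica sends a timeout message for round r carrying qc_high q.\<close>
definition timeout_sent :: "'i \<Rightarrow> (nat \<Rightarrow> ('i, 't) event) \<Rightarrow> nat \<Rightarrow> 'i qc \<Rightarrow> bool" where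
  "timeout_sent g ev r q \<longleftrightarrow>
     (\<exists>k. ev k = Expire \<and> rcur (run g ev k) = r \<and> qchigh (run g ev k) = q)"

definition votes_at :: "'i \<Rightarrow> (nat \<Rightarrow> ('i, 't) event) \<Rightarrow> nat \<Rightarrow> ('i, 't) block \<Rightarrow> bool" where
  "votes_at g ev k B' \<longleftrightarrow> ev k = RecvProposal B' \<and> vote_cond (pre_vote (run g ev k) B') B'"

definition certifies :: "'i qc \<Rightarrow> ('i, 't) block \<Rightarrow> bool" where
  "certifies q B \<longleftrightarrow> q = QC (bid B) (bround B) (bview B)"

definition globally_direct_committed ::
  "nat \<Rightarrow> nat set \<Rightarrow> 'i \<Rightarrow> (nat \<Rightarrow> nat \<Rightarrow> ('i, 't) event) \<Rightarrow> ('i, 't) block \<Rightarrow> bool" where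
  "globally_direct_committed f Hon g evs B \<longleftrightarrow>
     (\<exists>S \<subseteq> Hon. card S \<ge> f + 1 \<and>
        (\<forall>i \<in> S. \<exists>k B'. bround B' = bround B + 1 \<and> certifies (bqc B') B \<and>
                         votes_at g (evs i) k B'))"

definition valid_tc ::
  "nat \<Rightarrow> nat set \<Rightarrow> 'i \<Rightarrow> (nat \<Rightarrow> nat \<Rightarrow> ('i, 't) event) \<Rightarrow> 'i tc \<Rightarrow> bool" where
  "valid_tc f Hon g evs t \<longleftrightarrow>
     length (tc_msgs t) = 2*f + 1 \<and> distinct (map fst (tc_msgs t)) \<and>
     (\<forall>(j, q) \<in> set (tc_msgs t). j \<in> replicas f \<and> qc_round q < tc_round t \<and>
        (j \<in> Hon \<longrightarrow> timeout_sent g (evs j) (tc_round t) q))"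

end

theory Submission
  imports Defs
begin

definition sle :: "'i rstate \<Rightarrow> 'i rstate \<Rightarrow> bool" where
  "sle s s' \<longleftrightarrow> rcur s \<le> rcur s' \<and> qc_round (qchigh s) \<le> qc_round (qchigh s') \<and>
     (rcur s' = rcur s \<and> tmo s \<longrightarrow> tmo s')"

lemma sle_refl: "sle s s" by (simp add: sle_def)

lemma sle_trans: "sle a b \<Longrightarrow> sle b c \<Longrightarrow> sle a c"
  unfolding sle_def by (metis le_antisym order_trans)

lemma sle_advance: "sle s (advance s r)"
  by (simp add: sle_def advance_def)

lemma sle_lock: "sle s (lock s q)"
  by (simp add: sle_def lock_def maxqc_def)

lemma sle_see_qc: "sle s (see_qc s q)"
  unfolding see_qc_def by (meson sle_advance sle_lock sle_trans)

lemma sle_foldl: "sle s (foldl see_qc s qs)"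
proof (induction qs arbitrary: s)
  case Nil then show ?case by (simp add: sle_refl)
next
  case (Cons a qs) then show ?case by (simp) (meson sle_see_qc sle_trans)
qed

lemma sle_see_tc: "sle s (see_tc s t)"
  unfolding see_tc_def by (meson sle_advance sle_foldl sle_trans)

lemma sle_pre_vote: "sle s (pre_vote s B)"
  unfolding pre_vote_def Let_def
  by (cases "btc B") (auto intro: sle_see_qc sle_trans[OF sle_see_qc sle_see_tc])

lemma pre_vote_qc: "qc_round (bqc B) \<le> qc_round (qchigh (pre_vote s B))"
proof -
  have a: "qc_round (bqc B) \<le> qc_round (qchigh (see_qc s (bqc B)))"
    by (simp add: see_qc_def lock_def maxqc_def)
  show ?thesis
  proof (cases "btc B")
    case None then show ?thesis using a by (simp add: pre_vote_def)
  next
    case (Some t)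
    have "sle (see_qc s (bqc B)) (see_tc (see_qc s (bqc B)) t)" by (rule sle_see_tc)
    then show ?thesis using a Some by (simp add: pre_vote_def sle_def)
  qed
qed

lemma sle_proposal: "sle s (proposal_step s B)"
  using sle_pre_vote[of s B]
  by (simp add: proposal_step_def Let_def sle_def)

lemma sle_step: "sle s (step s e)"
  by (cases e) (simp_all add: sle_proposal sle_see_qc sle_see_tc sle_refl, simp add: sle_def)

lemma sle_run: "k \<le> k' \<Longrightarrow> sle (run g ev k) (run g ev k')"
proof (induction k' rule: dec_induct)
  case base then show ?case by (rule sle_refl)
next
  case (step n) then show ?case using sle_step sle_trans by (metis run.simps(2))
qed

lemma honest_ok:
  assumes v: "votes_at g ev k B'" and r: "bround B' = Suc r" and c: "qc_round (bqc B') = r"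
    and ts: "timeout_sent g ev rr q" and rr: "rr > r"
  shows "qc_round q \<ge> r"
proof -
  obtain k' where e: "ev k' = Expire" and rc: "rcur (run g ev k') = rr"
    and qq: "qchigh (run g ev k') = q" using ts unfolding timeout_sent_def by blast
  have ek: "ev k = RecvProposal B'" and vc: "vote_cond (pre_vote (run g ev k) B') B'"
    using v unfolding votes_at_def by auto
  let ?p = "pre_vote (run g ev k) B'"
  have prc: "rcur ?p = Suc r" and ptmo: "\<not> tmo ?p" using vc r by (auto simp: vote_cond_def)
  consider "k' < k" | "k' = k" | "k < k'" by arith
  then show ?thesis
  proof cases
    case 1
    have "sle (run g ev (Suc k')) (run g ev k)" using 1 by (intro sle_run) simp
    then have "sle (run g ev (Suc k')) ?p" using sle_pre_vote sle_trans by blast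
    moreover have "rcur (run g ev (Suc k')) = rr" "tmo (run g ev (Suc k'))"
      using e rc by auto
    ultimately show ?thesis using prc ptmo rr unfolding sle_def by auto
  next
    case 2 then show ?thesis using e ek by simp
  next
    case 3
    have "sle (run g ev (Suc k)) (run g ev k')" using 3 by (intro sle_run) simp
    moreover have "run g ev (Suc k) = proposal_step (run g ev k) B'" using ek by simp
    moreover have "qchigh (proposal_step (run g ev k) B') = qchigh ?p"
      by (simp add: proposal_step_def Let_def)
    ultimately show ?thesis using pre_vote_qc[of B' "run g ev k"] c qq
      unfolding sle_def by auto
  qed
qed

theorem lemma2:
  fixes f :: nat and Hon :: "nat set" and g :: 'i
    and evs :: "nat \<Rightarrow> nat \<Rightarrow> ('i, 't) event"
    and B :: "('i, 't) block" and t :: "'i tc"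
  assumes "Hon \<subseteq> replicas f"
    and "card (replicas f - Hon) \<le> f"
    and "globally_direct_committed f Hon g evs B"
    and "valid_tc f Hon g evs t"
    and "tc_round t > bround B"
  shows "\<exists>(j, q) \<in> set (tc_msgs t). qc_round q \<ge> bround B"
proof -
  obtain S where S: "S \<subseteq> Hon" "card S \<ge> f + 1"
    and SV: "\<forall>i \<in> S. \<exists>k B'. bround B' = bround B + 1 \<and> certifies (bqc B') B \<and>
                         votes_at g (evs i) k B'"
    using assms(3) unfolding globally_direct_committed_def by blast
  let ?A = "set (map fst (tc_msgs t))"
  have cA: "card ?A = 2*f+1" using assms(4) distinct_card unfolding valid_tc_def by fastforce
  have Asub: "?A \<subseteq> replicas f" using assms(4) unfolding valid_tc_def by auto
  have Ssub: "S \<subseteq> replicas f" using S assms(1) by auto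
  have fin: "finite (replicas f)" by (simp add: replicas_def)
  have cR: "card (replicas f) = 3*f+1" by (simp add: replicas_def)
  have "S \<inter> ?A \<noteq> {}"
  proof
    assume d: "S \<inter> ?A = {}"
    have "card (S \<union> ?A) = card S + card ?A"
      using d fin Asub Ssub by (meson card_Un_disjoint finite_subset)
    moreover have "card (S \<union> ?A) \<le> 3*f+1"
      using cR fin Asub Ssub by (metis Un_subset_iff card_mono)
    ultimately show False using S cA by arith
  qed
  then obtain i where iS: "i \<in> S" and iA: "i \<in> ?A" by blast
  then obtain q where iq: "(i, q) \<in> set (tc_msgs t)" by auto
  have "i \<in> Hon" using iS S by auto
  then have ts: "timeout_sent g (evs i) (tc_round t) q"
    using assms(4) iq unfolding valid_tc_def by auto
  obtain k B' where B': "bround B' = bround B + 1" "certifies (bqc B') B"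
    "votes_at g (evs i) k B'" using SV iS by blast
  have "qc_round (bqc B') = bround B" using B'(2) by (simp add: certifies_def)
  then have "qc_round q \<ge> bround B"
    using honest_ok[OF B'(3) _ _ ts assms(5)] B'(1) by simp
  then show ?thesis using iq by blast
qed

end
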